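(* Let $k,c\geq 0$ be integers. If $G$ is a $k$-gap-planar graph and a subgraph $G'$ of $G$ is a $(\leq c)$-subdivision of some graph $H$, then $H$ is $(c+1)k$-gap-planar.
   Context: All graphs are simple, finite and undirected. A drawing of a graph $G$ in the plane represents each vertex by a distinct point and each edge $vw$ by a non-self-intersecting curve between the points of $v$ and $w$, such that no three edges cross at a single point. A drawing is $k$-gap-planar if every crossing can be charged to one of the two edges involved so that at most $k$ crossings are charged to each edge; a graph is $k$-gap-planar if it has a $k$-gap-planar drawing in the plane. A $(\leq c)$-subdivision of a graph $H$ is obtained by replacing each edge of $H$ by a path with at most $c$ new internal vertices, the paths being internally disjoint. *)

theory Defs
  imports "HOL-Analysis.Analysis"
begin

definition graph :: "'v set \<Rightarrow> 'v set set \<Rightarrow> bool" where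
  "graph V E \<longleftrightarrow> finite V \<and> (\<forall>e\<in>E. \<exists>u v. e = {u, v} \<and> u \<noteq> v \<and> u \<in> V \<and> v \<in> V)"

definition subgraph :: "'v set \<Rightarrow> 'v set set \<Rightarrow> 'v set \<Rightarrow> 'v set set \<Rightarrow> bool" where
  "subgraph V' E' V E \<longleftrightarrow> graph V' E' \<and> V' \<subseteq> V \<and> E' \<subseteq> E"

text \<open>The plane is modelled as the complex numbers; curves are arcs (injective paths on [0,1]).\<close>
definition interior_pts :: "(real \<Rightarrow> complex) \<Rightarrow> complex set" where
  "interior_pts g = path_image g - {pathstart g, pathfinish g}"

definition crossings :: "'v set set \<Rightarrow> ('v set \<Rightarrow> real \<Rightarrow> complex) \<Rightarrow> ('v set set \<times> complex) set" where
  "crossings E curve =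
     {({e, f}, p) | e f p. e \<in> E \<and> f \<in> E \<and> e \<noteq> f \<and>
                          p \<in> interior_pts (curve e) \<and> p \<in> interior_pts (curve f)}"

definition drawing :: "'v set \<Rightarrow> 'v set set \<Rightarrow> ('v \<Rightarrow> complex) \<Rightarrow> ('v set \<Rightarrow> real \<Rightarrow> complex) \<Rightarrow> bool" where
  "drawing V E pos curve \<longleftrightarrow>
     inj_on pos V \<and>
     (\<forall>e\<in>E. arc (curve e) \<and>
             {pathstart (curve e), pathfinish (curve e)} = pos ` e \<and>
             path_image (curve e) \<inter> pos ` V = pos ` e) \<and>
     finite (crossings E curve) \<and>
     (\<forall>p. card {e \<in> E. p \<in> interior_pts (curve e)} \<le> 2)"

definition gap_planar_drawing ::
  "nat \<Rightarrow> 'v set \<Rightarrow> 'v set set \<Rightarrow> ('v \<Rightarrow> complex) \<Rightarrow> ('v set \<Rightarrow> real \<Rightarrow> complex) \<Rightarrow> bool" where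
  "gap_planar_drawing k V E pos curve \<longleftrightarrow>
     drawing V E pos curve \<and>
     (\<exists>ch. (\<forall>x\<in>crossings E curve. ch x \<in> fst x) \<and>
           (\<forall>e\<in>E. card {x \<in> crossings E curve. ch x = e} \<le> k))"

definition k_gap_planar :: "nat \<Rightarrow> 'v set \<Rightarrow> 'v set set \<Rightarrow> bool" where
  "k_gap_planar k V E \<longleftrightarrow> (\<exists>pos curve. gap_planar_drawing k V E pos curve)"

definition path_edges :: "'v list \<Rightarrow> 'v set set" where
  "path_edges xs = {{xs ! i, xs ! Suc i} | i. Suc i < length xs}"

definition inner_vertices :: "'v list \<Rightarrow> 'v set" where
  "inner_vertices xs = set (butlast (tl xs))"

definition subdivision_le :: "nat \<Rightarrow> 'v set \<Rightarrow> 'v set set \<Rightarrow> 'w set \<Rightarrow> 'w set set \<Rightarrow> bool" where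
  "subdivision_le c V' E' VH EH \<longleftrightarrow>
     (\<exists>(\<phi> :: 'w \<Rightarrow> 'v) (P :: 'w set \<Rightarrow> 'v list).
        inj_on \<phi> VH \<and>
        (\<forall>e\<in>EH. distinct (P e) \<and> 2 \<le> length (P e) \<and> length (P e) \<le> c + 2 \<and>
                 {hd (P e), last (P e)} = \<phi> ` e \<and>
                 inner_vertices (P e) \<inter> \<phi> ` VH = {}) \<and>
        (\<forall>e\<in>EH. \<forall>f\<in>EH. e \<noteq> f \<longrightarrow> inner_vertices (P e) \<inter> inner_vertices (P f) = {}) \<and>
        V' = \<phi> ` VH \<union> (\<Union>e\<in>EH. inner_vertices (P e)) \<and>
        E' = (\<Union>e\<in>EH. path_edges (P e)))"

end

theory Submission
  imports Defs
begin

lemma pe_cons: "xs \<noteq> [] \<Longrightarrow> path_edges (x # xs) = insert {x, hd xs} (path_edges xs)"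
  unfolding path_edges_def
proof (intro set_eqI iffI)
  fix g assume "xs \<noteq> []" "g \<in> {{(x # xs) ! i, (x # xs) ! Suc i} |i. Suc i < length (x # xs)}"
  then obtain i where g: "g = {(x # xs) ! i, (x # xs) ! Suc i}" "Suc i < length (x # xs)" by blast
  show "g \<in> insert {x, hd xs} {{xs ! i, xs ! Suc i} |i. Suc i < length xs}"
  proof (cases i)
    case 0 then show ?thesis using g \<open>xs \<noteq> []\<close> by (simp add: hd_conv_nth)
  next
    case (Suc j) then show ?thesis using g by auto
  qed
next
  fix g assume ne: "xs \<noteq> []" and "g \<in> insert {x, hd xs} {{xs ! i, xs ! Suc i} |i. Suc i < length xs}"
  then consider "g = {x, hd xs}" | i where "g = {xs ! i, xs ! Suc i}" "Suc i < length xs" by blast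
  then show "g \<in> {{(x # xs) ! i, (x # xs) ! Suc i} |i. Suc i < length (x # xs)}"
  proof cases
    case 1 then show ?thesis using ne
      by (auto simp: hd_conv_nth intro!: exI[of _ 0])
  next
    case 2 then show ?thesis by (auto intro!: exI[of _ "Suc i"])
  qed
qed

lemma pe_subset: "g \<in> path_edges xs \<Longrightarrow> g \<subseteq> set xs"
  unfolding path_edges_def by auto

lemma pe_two: "g \<in> path_edges xs \<Longrightarrow> distinct xs \<Longrightarrow> \<exists>x y. g = {x, y} \<and> x \<noteq> y \<and> x \<in> set xs \<and> y \<in> set xs"
proof -
  assume "g \<in> path_edges xs" "distinct xs"
  then obtain i where "g = {xs ! i, xs ! Suc i}" "Suc i < length xs" unfolding path_edges_def by auto
  moreover have "xs ! i \<noteq> xs ! Suc i" using calculation \<open>distinct xs\<close> by (simp add: nth_eq_iff_index_eq)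
  ultimately show ?thesis by (intro exI[of _ "xs!i"] exI[of _ "xs!Suc i"]) auto
qed

lemma pe_card: "card (path_edges xs) \<le> length xs - 1"
proof -
  have "path_edges xs = (\<lambda>i. {xs ! i, xs ! Suc i}) ` {..< length xs - 1}"
    unfolding path_edges_def by auto
  then show ?thesis using card_image_le[of "{..< length xs - 1}" "\<lambda>i. {xs ! i, xs ! Suc i}"] by simp
qed

lemma pe_finite: "finite (path_edges xs)"
proof -
  have "path_edges xs = (\<lambda>i. {xs ! i, xs ! Suc i}) ` {..< length xs - 1}"
    unfolding path_edges_def by auto
  then show ?thesis by simp
qed

lemma set_split:
  assumes "2 \<le> length xs"
  shows "set xs = insert (hd xs) (insert (last xs) (inner_vertices xs))"
proof -
  obtain a ys where Cons: "xs = a # ys" using assms by (cases xs) auto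
  then have "ys \<noteq> []" using assms by auto
  then obtain zs b where "ys = zs @ [b]" by (cases ys rule: rev_cases) auto
  then show ?thesis using Cons by (auto simp: inner_vertices_def)
qed

lemma hd_ne_last: "distinct xs \<Longrightarrow> 2 \<le> length xs \<Longrightarrow> hd xs \<noteq> last xs"
proof (cases xs)
  case (Cons a ys)
  assume "distinct xs" "2 \<le> length xs"
  then show ?thesis using Cons by (auto dest: last_in_set)
qed auto

lemma cat_exists:
  fixes curve :: "'v set \<Rightarrow> real \<Rightarrow> complex" and pos :: "'v \<Rightarrow> complex"
  assumes "xs \<noteq> []"
    and "\<forall>g \<in> path_edges xs. arc (curve g) \<and> {pathstart (curve g), pathfinish (curve g)} = pos ` g"
  shows "\<exists>\<gamma>. path \<gamma> \<and> pathstart \<gamma> = pos (hd xs) \<and> pathfinish \<gamma> = pos (last xs) \<and>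
     path_image \<gamma> \<subseteq> pos ` set xs \<union> (\<Union>g\<in>path_edges xs. path_image (curve g))"
  using assms
proof (induction xs)
  case Nil then show ?case by simp
next
  case (Cons x xs)
  show ?case
  proof (cases "xs = []")
    case True
    then show ?thesis by (intro exI[of _ "linepath (pos x) (pos x)"])
        (auto simp: pathstart_def pathfinish_def path_def path_image_def linepath_def)
  next
    case False
    have pe: "path_edges (x # xs) = insert {x, hd xs} (path_edges xs)" using pe_cons[OF False] .
    then obtain \<gamma> where g: "path \<gamma>" "pathstart \<gamma> = pos (hd xs)" "pathfinish \<gamma> = pos (last xs)"
       "path_image \<gamma> \<subseteq> pos ` set xs \<union> (\<Union>g\<in>path_edges xs. path_image (curve g))"
      using Cons False by auto
    define a where "a = curve {x, hd xs}"
    have a: "arc a" "{pathstart a, pathfinish a} = {pos x, pos (hd xs)}"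
      using Cons.prems pe unfolding a_def by auto
    have d: "pathfinish a \<noteq> pathstart a" using arc_distinct_ends[OF a(1)] .
    define a' where "a' = (if pathstart a = pos x then a else reversepath a)"
    have a': "path a'" "pathstart a' = pos x" "pathfinish a' = pos (hd xs)" "path_image a' = path_image a"
      using a d arc_imp_path unfolding a'_def by (auto simp: doubleton_eq_iff)
    show ?thesis
      apply (rule exI[of _ "a' +++ \<gamma>"])
      using a' g False pe unfolding a_def
      by (auto simp: path_image_join)
  qed
qed

theorem lemma10:
  fixes k c :: nat
    and V V' :: "'v set" and E E' :: "'v set set"
    and VH :: "'w set" and EH :: "'w set set"
  assumes "graph V E"
    and "k_gap_planar k V E"
    and "subgraph V' E' V E"
    and "graph VH EH"
    and "subdivision_le c V' E' VH EH"
  shows "k_gap_planar ((c + 1) * k) VH EH"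
proof -
  from assms(2) obtain pos curve where gp: "gap_planar_drawing k V E pos curve"
    unfolding k_gap_planar_def by blast
  then have dr: "drawing V E pos curve" unfolding gap_planar_drawing_def by blast
  from gp obtain chG where chG1: "\<forall>x\<in>crossings E curve. chG x \<in> fst x"
    and chG2: "\<forall>e\<in>E. card {x \<in> crossings E curve. chG x = e} \<le> k"
    unfolding gap_planar_drawing_def by blast
  have injpos: "inj_on pos V" and fincr: "finite (crossings E curve)"
    and two: "\<And>p. card {g \<in> E. p \<in> interior_pts (curve g)} \<le> 2"
    using dr unfolding drawing_def by auto
  have cur: "\<And>g. g\<in>E \<Longrightarrow> arc (curve g) \<and> {pathstart (curve g), pathfinish (curve g)} = pos ` g \<and>
      path_image (curve g) \<inter> pos ` V = pos ` g"
    using dr unfolding drawing_def by auto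
  from assms(5)[unfolded subdivision_le_def] obtain \<phi> :: "'w \<Rightarrow> 'v" and P where injphi: "inj_on \<phi> VH"
    and Pp0: "\<forall>e\<in>EH. distinct (P e) \<and> 2 \<le> length (P e) \<and> length (P e) \<le> c + 2 \<and>
                 {hd (P e), last (P e)} = \<phi> ` e \<and> inner_vertices (P e) \<inter> \<phi> ` VH = {}"
    and Pdisj0: "\<forall>e\<in>EH. \<forall>f\<in>EH. e \<noteq> f \<longrightarrow> inner_vertices (P e) \<inter> inner_vertices (P f) = {}"
    and V'def: "V' = \<phi> ` VH \<union> (\<Union>e\<in>EH. inner_vertices (P e))"
    and E'def: "E' = (\<Union>e\<in>EH. path_edges (P e))"
    by blast
  have Pp: "\<And>e. e\<in>EH \<Longrightarrow> distinct (P e) \<and> 2 \<le> length (P e) \<and> length (P e) \<le> c + 2 \<and>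
                 {hd (P e), last (P e)} = \<phi> ` e \<and> inner_vertices (P e) \<inter> \<phi> ` VH = {}"
    using Pp0 by blast
  have Pdisj: "\<And>e f. e\<in>EH \<Longrightarrow> f\<in>EH \<Longrightarrow> e \<noteq> f \<Longrightarrow> inner_vertices (P e) \<inter> inner_vertices (P f) = {}"
    using Pdisj0 by blast
  have EV: "\<And>g. g \<in> E \<Longrightarrow> g \<subseteq> V" using assms(1) unfolding graph_def by auto
  have finE: "finite E"
  proof -
    have "E \<subseteq> Pow V" using EV by auto
    moreover have "finite V" using assms(1) unfolding graph_def by auto
    ultimately show ?thesis by (meson finite_Pow_iff finite_subset)
  qed
  have EHV: "\<And>e. e \<in> EH \<Longrightarrow> e \<subseteq> VH" using assms(4) unfolding graph_def by auto
  have finEH: "finite EH"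
  proof -
    have "EH \<subseteq> Pow VH" using EHV by auto
    moreover have "finite VH" using assms(4) unfolding graph_def by auto
    ultimately show ?thesis by (meson finite_Pow_iff finite_subset)
  qed
  have E'E: "E' \<subseteq> E" "V' \<subseteq> V" using assms(3) unfolding subgraph_def by auto
  have PE: "\<And>e. e\<in>EH \<Longrightarrow> path_edges (P e) \<subseteq> E" using E'def E'E by auto
  have phiV: "\<phi> ` VH \<subseteq> V" using V'def E'E by auto
  have PV: "\<And>e. e\<in>EH \<Longrightarrow> set (P e) \<subseteq> V"
  proof -
    fix e assume e: "e \<in> EH"
    have s: "set (P e) = insert (hd (P e)) (insert (last (P e)) (inner_vertices (P e)))"
      using set_split[of "P e"] Pp[OF e] by simp
    have "{hd (P e), last (P e)} \<subseteq> V" using Pp[OF e] phiV EHV[OF e] by (metis image_mono order_trans)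
    moreover have "inner_vertices (P e) \<subseteq> V" using V'def E'E e by blast
    ultimately show "set (P e) \<subseteq> V" unfolding s by blast
  qed
  have hl: "\<And>e. e\<in>EH \<Longrightarrow> hd (P e) \<noteq> last (P e)"
  proof -
    fix e assume e: "e \<in> EH"
    show "hd (P e) \<noteq> last (P e)" using hd_ne_last[of "P e"] Pp[OF e] by simp
  qed
  have Pends: "\<And>e. e\<in>EH \<Longrightarrow> {hd (P e), last (P e)} = \<phi> ` e" using Pp by blast
  have Pinner: "\<And>e. e\<in>EH \<Longrightarrow> inner_vertices (P e) \<inter> \<phi> ` VH = {}" using Pp by blast
  have Pset: "\<And>e. e\<in>EH \<Longrightarrow> set (P e) = insert (hd (P e)) (insert (last (P e)) (inner_vertices (P e)))"
    using set_split Pp by blast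
  have common: "\<And>e f x. e\<in>EH \<Longrightarrow> f\<in>EH \<Longrightarrow> e\<noteq>f \<Longrightarrow> x \<in> set (P e) \<Longrightarrow> x \<in> set (P f) \<Longrightarrow>
      x \<in> {hd (P e), last (P e)}"
  proof -
    fix e f x assume e: "e\<in>EH" and f: "f\<in>EH" and ef: "e\<noteq>f" and xe: "x \<in> set (P e)" and xf: "x \<in> set (P f)"
    have "x \<in> {hd (P e), last (P e)} \<or> x \<in> inner_vertices (P e)" using xe Pset[OF e] by blast
    moreover
    {
      assume xi: "x \<in> inner_vertices (P e)"
      have nphi: "x \<notin> \<phi> ` VH" using Pinner[OF e] xi by blast
      have "x \<in> {hd (P f), last (P f)} \<or> x \<in> inner_vertices (P f)" using xf Pset[OF f] by blast
      moreover have "{hd (P f), last (P f)} \<subseteq> \<phi> ` VH" unfolding Pends[OF f] using EHV[OF f] by (rule image_mono)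
      moreover have "x \<notin> inner_vertices (P f)" using Pdisj[OF e f ef] xi by blast
      ultimately have False using nphi by blast
    }
    ultimately show "x \<in> {hd (P e), last (P e)}" by blast
  qed
  have edisj: "\<And>e f g. e\<in>EH \<Longrightarrow> f\<in>EH \<Longrightarrow> e\<noteq>f \<Longrightarrow> g \<in> path_edges (P e) \<Longrightarrow> g \<in> path_edges (P f) \<Longrightarrow> False"
  proof -
    fix e f g assume e: "e\<in>EH" and f: "f\<in>EH" and ef: "e\<noteq>f" and ge: "g \<in> path_edges (P e)"
      and gf: "g \<in> path_edges (P f)"
    obtain x y where xy: "g = {x, y}" "x \<noteq> y" "x \<in> set (P e)" "y \<in> set (P e)"
      using pe_two[OF ge] Pp[OF e] by blast
    have "x \<in> set (P f)" "y \<in> set (P f)" using pe_subset[OF gf] xy by auto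
    then have "x \<in> {hd (P e), last (P e)}" "y \<in> {hd (P e), last (P e)}"
      "x \<in> {hd (P f), last (P f)}" "y \<in> {hd (P f), last (P f)}"
      using common[OF e f ef] common[OF f e] ef xy by metis+
    then have "{x, y} = {hd (P e), last (P e)}" "{x, y} = {hd (P f), last (P f)}" using xy(2) by auto
    then have "{hd (P e), last (P e)} = {hd (P f), last (P f)}" by simp
    then have "\<phi> ` e = \<phi> ` f" using Pends[OF e] Pends[OF f] by simp
    then have "e = f" using inj_on_image_eq_iff[OF injphi EHV[OF e] EHV[OF f]] by simp
    then show False using ef by simp
  qed
  have hex: "\<And>e. e\<in>EH \<Longrightarrow> \<exists>h. arc h \<and> pathstart h = pos (hd (P e)) \<and> pathfinish h = pos (last (P e)) \<and>
      path_image h \<subseteq> pos ` set (P e) \<union> (\<Union>g\<in>path_edges (P e). path_image (curve g))"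
  proof -
    fix e assume e: "e \<in> EH"
    have "P e \<noteq> []" using Pp[OF e] by auto
    moreover have "\<forall>g \<in> path_edges (P e). arc (curve g) \<and> {pathstart (curve g), pathfinish (curve g)} = pos ` g"
      using PE[OF e] cur by blast
    ultimately obtain \<gamma> where g: "path \<gamma>" "pathstart \<gamma> = pos (hd (P e))" "pathfinish \<gamma> = pos (last (P e))"
      "path_image \<gamma> \<subseteq> pos ` set (P e) \<union> (\<Union>g\<in>path_edges (P e). path_image (curve g))"
      using cat_exists[of "P e" curve pos] by blast
    have "hd (P e) \<in> set (P e)" "last (P e) \<in> set (P e)" using \<open>P e \<noteq> []\<close> by auto
    then have "pos (hd (P e)) \<noteq> pos (last (P e))"
      using hl[OF e] inj_onD[OF injpos] PV[OF e] by blast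
    then obtain q where "arc q" "path_image q \<subseteq> path_image \<gamma>" "pathstart q = pos (hd (P e))"
      "pathfinish q = pos (last (P e))"
      using path_contains_arc[OF g(1-3)] by blast
    then show "?thesis e" using g(4) by blast
  qed
  define h where "h e = (SOME h. arc h \<and> pathstart h = pos (hd (P e)) \<and> pathfinish h = pos (last (P e)) \<and>
      path_image h \<subseteq> pos ` set (P e) \<union> (\<Union>g\<in>path_edges (P e). path_image (curve g)))" for e
  have hP: "\<And>e. e\<in>EH \<Longrightarrow> arc (h e) \<and> pathstart (h e) = pos (hd (P e)) \<and> pathfinish (h e) = pos (last (P e)) \<and>
      path_image (h e) \<subseteq> pos ` set (P e) \<union> (\<Union>g\<in>path_edges (P e). path_image (curve g))"
    unfolding h_def using someI_ex[OF hex] by blast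
  have Vcase: "\<And>e p. e\<in>EH \<Longrightarrow> p \<in> path_image (h e) \<Longrightarrow> p \<in> pos ` V \<Longrightarrow> \<exists>x\<in>set (P e). p = pos x"
  proof -
    fix e p assume e: "e\<in>EH" and p: "p \<in> path_image (h e)" and pV: "p \<in> pos ` V"
    then consider "p \<in> pos ` set (P e)" | g where "g \<in> path_edges (P e)" "p \<in> path_image (curve g)"
      using hP[OF e] by blast
    then show "\<exists>x\<in>set (P e). p = pos x"
    proof cases
      case 1 then show ?thesis by auto
    next
      case 2
      then have "p \<in> pos ` g" using cur[of g] PE[OF e] pV by blast
      then show ?thesis using pe_subset[OF 2(1)] by auto
    qed
  qed
  have NVcase: "\<And>e p. e\<in>EH \<Longrightarrow> p \<in> path_image (h e) \<Longrightarrow> p \<notin> pos ` V \<Longrightarrow>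
      \<exists>g\<in>path_edges (P e). p \<in> interior_pts (curve g)"
  proof -
    fix e p assume e: "e\<in>EH" and p: "p \<in> path_image (h e)" and pV: "p \<notin> pos ` V"
    have "p \<notin> pos ` set (P e)" using pV PV[OF e] by auto
    then obtain g where g: "g \<in> path_edges (P e)" "p \<in> path_image (curve g)"
      using hP[OF e] p by blast
    have "{pathstart (curve g), pathfinish (curve g)} \<subseteq> pos ` V"
    proof -
      have gE: "g \<in> E" using PE[OF e] g(1) by blast
      have "{pathstart (curve g), pathfinish (curve g)} = pos ` g" using cur[OF gE] by blast
      also have "\<dots> \<subseteq> pos ` V" using EV[OF gE] by (rule image_mono)
      finally show ?thesis .
    qed
    then have "p \<in> interior_pts (curve g)" using g pV unfolding interior_pts_def by auto
    then show "\<exists>g\<in>path_edges (P e). p \<in> interior_pts (curve g)" using g by blast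
  qed
  have intimg: "\<And>g p. p \<in> interior_pts g \<Longrightarrow> p \<in> path_image g" unfolding interior_pts_def by auto
  have notV: "\<And>e f p. e\<in>EH \<Longrightarrow> f\<in>EH \<Longrightarrow> e\<noteq>f \<Longrightarrow> p \<in> interior_pts (h e) \<Longrightarrow> p \<in> path_image (h f) \<Longrightarrow> p \<notin> pos ` V"
  proof
    fix e f p assume e: "e\<in>EH" and f: "f\<in>EH" and ef: "e\<noteq>f" and pe: "p \<in> interior_pts (h e)"
      and pf: "p \<in> path_image (h f)" and pV: "p \<in> pos ` V"
    obtain x where x: "x \<in> set (P e)" "p = pos x" using Vcase[OF e intimg[OF pe] pV] by blast
    obtain y where y: "y \<in> set (P f)" "p = pos y" using Vcase[OF f pf pV] by blast
    have "x = y" using x y PV[OF e] PV[OF f] inj_onD[OF injpos] by blast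
    then have "x \<in> {hd (P e), last (P e)}" using common[OF e f ef] x y by blast
    then have "p \<in> {pathstart (h e), pathfinish (h e)}" using hP[OF e] x by auto
    then show False using pe unfolding interior_pts_def by auto
  qed
  define G where "G p = {g \<in> E. p \<in> interior_pts (curve g)}" for p
  have finG: "\<And>p. finite (G p)" unfolding G_def using finE by auto
  have cardH: "\<And>p. card {e \<in> EH. p \<in> interior_pts (h e)} \<le> 2"
  proof -
    fix p
    define A where "A = {e \<in> EH. p \<in> interior_pts (h e)}"
    have finA: "finite A" unfolding A_def using finEH by auto
    show "card {e \<in> EH. p \<in> interior_pts (h e)} \<le> 2"
    proof (cases "\<forall>a\<in>A. \<forall>b\<in>A. a = b")
      case True
      then have "card A \<le> Suc 0" using card_le_Suc0_iff_eq[OF finA] by blast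
      then show ?thesis unfolding A_def by simp
    next
      case False
      then obtain a b where ab: "a \<in> A" "b \<in> A" "a \<noteq> b" by blast
      then have pV: "p \<notin> pos ` V" using notV[of a b p] intimg unfolding A_def by blast
      define gs where "gs e = (SOME g. g\<in>path_edges (P e) \<and> p \<in> interior_pts (curve g))" for e
      have gs: "\<And>e. e \<in> A \<Longrightarrow> gs e \<in> path_edges (P e) \<and> p \<in> interior_pts (curve (gs e))"
      proof -
        fix e assume "e \<in> A"
        then have "\<exists>g. g\<in>path_edges (P e) \<and> p \<in> interior_pts (curve g)"
          using NVcase[of e p] pV intimg unfolding A_def by blast
        then show "?thesis e" unfolding gs_def by (rule someI_ex)
      qed
      have "inj_on gs A"
      proof (rule inj_onI)
        fix x y assume "x \<in> A" "y \<in> A" "gs x = gs y"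
        then show "x = y" using gs[of x] gs[of y] edisj[of x y "gs x"] unfolding A_def by auto
      qed
      moreover have "gs ` A \<subseteq> G p" using gs PE unfolding G_def A_def by blast
      ultimately have "card A \<le> card (G p)" using card_inj_on_le finG by blast
      also have "\<dots> \<le> 2" using two unfolding G_def by blast
      finally show ?thesis unfolding A_def .
    qed
  qed
  have crossmem: "\<And>x. x \<in> crossings EH h \<longleftrightarrow> (\<exists>e f. fst x = {e, f} \<and> e \<in> EH \<and> f \<in> EH \<and> e \<noteq> f \<and>
        snd x \<in> interior_pts (h e) \<and> snd x \<in> interior_pts (h f))"
    unfolding crossings_def by (auto simp: prod_eq_iff)
  define ch where "ch x = (SOME e. e \<in> fst x \<and> chG (G (snd x), snd x) \<in> path_edges (P e))" for x
  have crossH: "\<And>x. x \<in> crossings EH h \<Longrightarrow> ch x \<in> fst x \<and> chG (G (snd x), snd x) \<in> path_edges (P (ch x))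
       \<and> (G (snd x), snd x) \<in> crossings E curve"
  proof -
    fix x assume "x \<in> crossings EH h"
    then obtain e f where ef: "fst x = {e, f}" "e \<in> EH" "f \<in> EH" "e \<noteq> f"
      "snd x \<in> interior_pts (h e)" "snd x \<in> interior_pts (h f)" using crossmem[of x] by blast
    define p where "p = snd x"
    have pV: "p \<notin> pos ` V" using notV[OF ef(2,3,4)] ef intimg unfolding p_def by blast
    obtain g1 where g1: "g1 \<in> path_edges (P e)" "p \<in> interior_pts (curve g1)"
      using NVcase[OF ef(2) _ pV] ef intimg unfolding p_def by blast
    obtain g2 where g2: "g2 \<in> path_edges (P f)" "p \<in> interior_pts (curve g2)"
      using NVcase[OF ef(3) _ pV] ef intimg unfolding p_def by blast
    have g12: "g1 \<noteq> g2" using edisj[OF ef(2,3,4)] g1 g2 by blast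
    have gE: "g1 \<in> E" "g2 \<in> E" using g1 g2 PE ef by auto
    have sub: "{g1, g2} \<subseteq> G p" using g1 g2 gE unfolding G_def by auto
    have "card (G p) \<le> card {g1, g2}" using two[of p] g12 unfolding G_def by simp
    then have Gp: "G p = {g1, g2}" using card_seteq[OF finG sub] by simp
    have cr: "(G p, p) \<in> crossings E curve" unfolding Gp crossings_def
      using g1(2) g2(2) gE g12 by (intro CollectI exI[of _ g1] exI[of _ g2] exI[of _ p]) simp
    then have "chG (G p, p) \<in> fst (G p, p)" using chG1 by blast
    then have "chG (G p, p) \<in> {g1, g2}" using Gp by simp
    then have "chG (G p, p) \<in> path_edges (P e) \<or> chG (G p, p) \<in> path_edges (P f)"
      using g1(1) g2(1) by blast
    then have "\<exists>e'. e' \<in> fst x \<and> chG (G (snd x), snd x) \<in> path_edges (P e')"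
      unfolding p_def ef(1) by blast
    then have "ch x \<in> fst x \<and> chG (G (snd x), snd x) \<in> path_edges (P (ch x))"
      unfolding ch_def by (rule someI_ex)
    then show "?thesis x" using cr unfolding p_def by blast
  qed
  have finH: "finite (crossings EH h)"
  proof -
    have "crossings EH h \<subseteq> Pow EH \<times> (snd ` crossings E curve)"
    proof
      fix x assume x: "x \<in> crossings EH h"
      then have "fst x \<in> Pow EH" using crossmem[of x] by auto
      moreover have "snd x \<in> snd ` crossings E curve" using crossH[OF x] by force
      ultimately show "x \<in> Pow EH \<times> (snd ` crossings E curve)" by (simp add: mem_Times_iff)
    qed
    then show ?thesis using finEH fincr by (meson finite_Pow_iff finite_SigmaI finite_imageI finite_subset)
  qed
  have crossform: "\<And>x e. x \<in> crossings EH h \<Longrightarrow> e \<in> fst x \<Longrightarrow> \<exists>e2. fst x = {e, e2} \<and> e2 \<in> EH \<and> e \<in> EH \<and> e2 \<noteq> e \<and>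
      snd x \<in> interior_pts (h e) \<and> snd x \<in> interior_pts (h e2)"
  proof -
    fix x e assume x: "x \<in> crossings EH h" and e: "e \<in> fst x"
    then obtain a b where ab: "fst x = {a, b}" "a \<in> EH" "b \<in> EH" "a \<noteq> b"
      "snd x \<in> interior_pts (h a)" "snd x \<in> interior_pts (h b)" using crossmem[of x] by blast
    show "?thesis x e"
    proof (cases "e = a")
      case True then show ?thesis using ab by blast
    next
      case False then have "e = b" using ab e by auto
      then show ?thesis using ab by (intro exI[of _ a]) auto
    qed
  qed
  have count: "\<And>e. e \<in> EH \<Longrightarrow> card {x \<in> crossings EH h. ch x = e} \<le> (c + 1) * k"
  proof -
    fix e assume e: "e \<in> EH"
    define X where "X = {x \<in> crossings EH h. ch x = e}"
    define U where "U = (\<Union>g\<in>path_edges (P e). {y \<in> crossings E curve. chG y = g})"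
    have finU: "finite U" unfolding U_def using fincr by (rule rev_finite_subset) blast
    have "inj_on snd X"
    proof (rule inj_onI)
      fix x y assume x: "x \<in> X" and y: "y \<in> X" and s: "snd x = snd y"
      have xe: "ch x = e" "ch y = e" using x y unfolding X_def by auto
      obtain o1 where o1: "fst x = {e, o1}" "o1 \<in> EH" "o1 \<noteq> e" "snd x \<in> interior_pts (h e)"
        "snd x \<in> interior_pts (h o1)"
        using crossform[of x e] crossH[of x] x xe unfolding X_def by auto
      obtain o2 where o2: "fst y = {e, o2}" "o2 \<in> EH" "o2 \<noteq> e" "snd y \<in> interior_pts (h o2)"
        using crossform[of y e] crossH[of y] y xe unfolding X_def by auto
      have "o1 = o2"
      proof (rule ccontr)
        assume "o1 \<noteq> o2"
        have "{e, o1, o2} \<subseteq> {e' \<in> EH. snd x \<in> interior_pts (h e')}" using o1 o2 s e by auto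
        then have "card {e, o1, o2} \<le> card {e' \<in> EH. snd x \<in> interior_pts (h e')}"
          using finEH by (intro card_mono) auto
        also have "\<dots> \<le> 2" using cardH .
        finally show False using \<open>o1 \<noteq> o2\<close> o1 o2 by simp
      qed
      then show "x = y" using o1 o2 s by (simp add: prod_eq_iff)
    qed
    then have "card X = card (snd ` X)" by (simp add: card_image)
    also have "snd ` X \<subseteq> snd ` U"
    proof
      fix p assume "p \<in> snd ` X"
      then obtain x where x: "x \<in> X" "p = snd x" by blast
      then have "(G p, p) \<in> U" using crossH[of x] e unfolding X_def U_def by auto
      then show "p \<in> snd ` U" by force
    qed
    then have "card (snd ` X) \<le> card (snd ` U)" using finU by (intro card_mono) auto
    also have "\<dots> \<le> card U" using finU card_image_le by blast
    also have "\<dots> \<le> (\<Sum>g\<in>path_edges (P e). card {y \<in> crossings E curve. chG y = g})"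
      unfolding U_def using pe_finite card_UN_le by blast
    also have "\<dots> \<le> card (path_edges (P e)) * k"
      using sum_bounded_above[of "path_edges (P e)" "\<lambda>g. card {y \<in> crossings E curve. chG y = g}" k]
        chG2 PE[OF e] by auto
    also have "\<dots> \<le> (c + 1) * k"
      using pe_card[of "P e"] Pp[OF e] by (intro mult_right_mono) auto
    finally show "card {x \<in> crossings EH h. ch x = e} \<le> (c + 1) * k" unfolding X_def .
  qed
  have injH: "inj_on (pos \<circ> \<phi>) VH" using comp_inj_on[OF injphi inj_on_subset[OF injpos phiV]] .
  have edgeH: "\<And>e. e \<in> EH \<Longrightarrow> arc (h e) \<and> {pathstart (h e), pathfinish (h e)} = (pos \<circ> \<phi>) ` e \<and>
             path_image (h e) \<inter> (pos \<circ> \<phi>) ` VH = (pos \<circ> \<phi>) ` e"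
  proof -
    fix e assume e: "e \<in> EH"
    have ends: "{pathstart (h e), pathfinish (h e)} = (pos \<circ> \<phi>) ` e"
    proof -
      have "{pathstart (h e), pathfinish (h e)} = pos ` {hd (P e), last (P e)}" using hP[OF e] by simp
      also have "\<dots> = pos ` (\<phi> ` e)" using Pends[OF e] by simp
      also have "\<dots> = (pos \<circ> \<phi>) ` e" by (simp add: image_comp)
      finally show ?thesis .
    qed
    have "path_image (h e) \<inter> (pos \<circ> \<phi>) ` VH \<subseteq> (pos \<circ> \<phi>) ` e"
    proof
      fix p assume p: "p \<in> path_image (h e) \<inter> (pos \<circ> \<phi>) ` VH"
      then obtain w where w: "w \<in> VH" "p = pos (\<phi> w)" by auto
      then have "p \<in> pos ` V" using phiV by auto
      then obtain x where x: "x \<in> set (P e)" "p = pos x" using Vcase[OF e] p by blast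
      have "x = \<phi> w" using x w PV[OF e] phiV inj_onD[OF injpos] by blast
      then have "x \<in> {hd (P e), last (P e)}"
        using set_split[of "P e"] Pp[OF e] x w by blast
      then show "p \<in> (pos \<circ> \<phi>) ` e" using ends hP[OF e] x by auto
    qed
    moreover have "(pos \<circ> \<phi>) ` e \<subseteq> path_image (h e) \<inter> (pos \<circ> \<phi>) ` VH"
    proof -
      have "(pos \<circ> \<phi>) ` e \<subseteq> path_image (h e)" unfolding ends[symmetric]
        using pathstart_in_path_image[of "h e"] pathfinish_in_path_image[of "h e"] by blast
      moreover have "(pos \<circ> \<phi>) ` e \<subseteq> (pos \<circ> \<phi>) ` VH" using EHV[OF e] by (rule image_mono)
      ultimately show ?thesis by blast
    qed
    ultimately show "?thesis e" using hP[OF e] ends by blast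
  qed
  have "gap_planar_drawing ((c + 1) * k) VH EH (pos \<circ> \<phi>) h"
    unfolding gap_planar_drawing_def drawing_def
  proof (intro conjI exI[of _ ch])
    show "inj_on (pos \<circ> \<phi>) VH" by (rule injH)
    show "\<forall>e\<in>EH. arc (h e) \<and> {pathstart (h e), pathfinish (h e)} = (pos \<circ> \<phi>) ` e \<and>
             path_image (h e) \<inter> (pos \<circ> \<phi>) ` VH = (pos \<circ> \<phi>) ` e" using edgeH by blast
    show "finite (crossings EH h)" by (rule finH)
    show "\<forall>p. card {e \<in> EH. p \<in> interior_pts (h e)} \<le> 2" using cardH by blast
    show "\<forall>x\<in>crossings EH h. ch x \<in> fst x" using crossH by blast
    show "\<forall>e\<in>EH. card {x \<in> crossings EH h. ch x = e} \<le> (c + 1) * k" using count by blast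
  qed
  then show ?thesis unfolding k_gap_planar_def by blast
qed

end
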